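(* There is a constant $c>0$ such that for every $n \ge 2$, every path on $n$ vertices has an $x$-monotone straight-through drawing on any set of at least $c\, n \log n$ points in the plane in general orthogonal position.
   Context: A point set is in general orthogonal position if no two of its points share the same $x$-coordinate or the same $y$-coordinate. Points are unlabelled: a drawing of a graph on a point set $P$ places the vertices at distinct points of $P$ (any vertex may go to any point; not all points need to be used). A planar L-shaped drawing is such a placement in which every edge is drawn as an orthogonal polygonal path consisting of one horizontal and one vertical segment (one bend) between its endpoints, and no two edges intersect except at a common endpoint. A straight-through drawing of a path is a planar L-shaped drawing in which, at every vertex, its (at most two) incident edges are aligned, i.e., both leave the vertex horizontally or both leave it vertically. The drawing is $x$-monotone if the $x$-coordinates of the vertices are non-decreasing in the order along the path. *)

theory Defs
  imports "HOL-Analysis.Analysis"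
begin

type_synonym point = "real \<times> real"

definition general_orthogonal_position :: "point set \<Rightarrow> bool" where
  "general_orthogonal_position P \<longleftrightarrow>
     (\<forall>p\<in>P. \<forall>q\<in>P. p \<noteq> q \<longrightarrow> fst p \<noteq> fst q \<and> snd p \<noteq> snd q)"

text \<open>If h is True, the edge
  leaves p horizontally (bend at (x_q, y_p)) and enters q vertically; otherwise it
  leaves p vertically (bend at (x_p, y_q)) and enters q horizontally.\<close>
definition bend_point :: "point \<Rightarrow> point \<Rightarrow> bool \<Rightarrow> point" where
  "bend_point p q h = (if h then (fst q, snd p) else (fst p, snd q))"

definition L_edge :: "point \<Rightarrow> point \<Rightarrow> bool \<Rightarrow> point set" where
  "L_edge p q h = closed_segment p (bend_point p q h) \<union> closed_segment (bend_point p q h) q"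

text \<open>Path on n vertices 0,...,n-1 with edges {i, i+1}.\<close>
definition path_edge :: "(nat \<Rightarrow> point) \<Rightarrow> (nat \<Rightarrow> bool) \<Rightarrow> nat \<Rightarrow> point set" where
  "path_edge pos hb i = L_edge (pos i) (pos (Suc i)) (hb i)"

definition planar_L_drawing_path ::
  "point set \<Rightarrow> nat \<Rightarrow> (nat \<Rightarrow> point) \<Rightarrow> (nat \<Rightarrow> bool) \<Rightarrow> bool" where
  "planar_L_drawing_path P n pos hb \<longleftrightarrow>
     inj_on pos {..<n} \<and> pos ` {..<n} \<subseteq> P \<and>
     (\<forall>i j. i < j \<and> Suc j < n \<longrightarrow>
        path_edge pos hb i \<inter> path_edge pos hb j \<subseteq> pos ` ({i, Suc i} \<inter> {j, Suc j}))"

definition leaves_start_horizontally :: "(nat \<Rightarrow> bool) \<Rightarrow> nat \<Rightarrow> bool" where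
  "leaves_start_horizontally hb i = hb i"

definition leaves_end_horizontally :: "(nat \<Rightarrow> bool) \<Rightarrow> nat \<Rightarrow> bool" where
  "leaves_end_horizontally hb i = (\<not> hb i)"

definition straight_through_drawing_path ::
  "point set \<Rightarrow> nat \<Rightarrow> (nat \<Rightarrow> point) \<Rightarrow> (nat \<Rightarrow> bool) \<Rightarrow> bool" where
  "straight_through_drawing_path P n pos hb \<longleftrightarrow>
     planar_L_drawing_path P n pos hb \<and>
     (\<forall>i. 0 < i \<and> Suc i < n \<longrightarrow>
        leaves_end_horizontally hb (i - 1) = leaves_start_horizontally hb i)"

definition x_monotone_path :: "nat \<Rightarrow> (nat \<Rightarrow> point) \<Rightarrow> bool" where
  "x_monotone_path n pos \<longleftrightarrow> (\<forall>i. Suc i < n \<longrightarrow> fst (pos i) \<le> fst (pos (Suc i)))"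

end

theory Submission imports Defs begin

definition mono3 :: "real \<Rightarrow> real \<Rightarrow> real \<Rightarrow> bool" where
  "mono3 a b c \<longleftrightarrow> (a < b \<and> b < c \<or> c < b \<and> b < a)"

lemma es5_core:
  fixes a b c d e :: real
  assumes "distinct [a,b,c,d,e]"
  shows "mono3 a b c \<or> mono3 a b d \<or> mono3 a b e \<or> mono3 a c d \<or> mono3 a c e \<or>
         mono3 a d e \<or> mono3 b c d \<or> mono3 b c e \<or> mono3 b d e \<or> mono3 c d e"
  using assms unfolding mono3_def by simp smt

lemma seg_bounds:
  fixes a b z :: point
  assumes "z \<in> closed_segment a b"
  shows "min (fst a) (fst b) \<le> fst z \<and> fst z \<le> max (fst a) (fst b) \<and>
         min (snd a) (snd b) \<le> snd z \<and> snd z \<le> max (snd a) (snd b)"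
proof -
  have "fst z \<in> closed_segment (fst a) (fst b)"
    using assms closed_segment_linear_image[of fst a b] linear_fst by auto
  moreover have "snd z \<in> closed_segment (snd a) (snd b)"
    using assms closed_segment_linear_image[of snd a b] linear_snd by auto
  ultimately show ?thesis by (auto simp: closed_segment_eq_real_ivl split: if_splits)
qed

lemma edge_mem:
  assumes "z \<in> L_edge p q h" "fst p \<le> fst q"
  shows "fst p \<le> fst z \<and> fst z \<le> fst q \<and> min (snd p) (snd q) \<le> snd z \<and> snd z \<le> max (snd p) (snd q)
     \<and> (if h then snd z = snd p \<or> fst z = fst q else fst z = fst p \<or> snd z = snd q)"
  using assms unfolding L_edge_def bend_point_def
  by (cases h) (auto dest!: seg_bounds)

lemma gop_snd: "general_orthogonal_position T \<Longrightarrow> u\<in>T \<Longrightarrow> v\<in>T \<Longrightarrow> u\<noteq>v \<Longrightarrow> snd u \<noteq> snd v"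
  by (simp add: general_orthogonal_position_def)

lemma trip: "mono3 (snd a) (snd b) (snd c) \<Longrightarrow> a\<in>T \<Longrightarrow> b\<in>T \<Longrightarrow> c\<in>T \<Longrightarrow>
  fst a < fst b \<Longrightarrow> fst b < fst c \<Longrightarrow>
  \<exists>p\<in>T. \<exists>q\<in>T. \<exists>r\<in>T. fst p < fst q \<and> fst q < fst r \<and> mono3 (snd p) (snd q) (snd r)"
  by blast

lemma es5:
  assumes "finite T" "general_orthogonal_position T" "card T \<ge> 5"
  shows "\<exists>p\<in>T. \<exists>q\<in>T. \<exists>r\<in>T. fst p < fst q \<and> fst q < fst r \<and> mono3 (snd p) (snd q) (snd r)"
proof -
  have inj: "inj_on fst T" using assms(2) unfolding general_orthogonal_position_def inj_on_def by blast
  define L where "L = sorted_list_of_set (fst ` T)"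
  have len: "length L \<ge> 5" using assms inj by (simp add: L_def card_image)
  have srt: "sorted_wrt (<) L" by (simp add: L_def)
  have setL: "set L = fst ` T" using assms by (simp add: L_def)
  have lt: "\<And>i j. i < j \<Longrightarrow> j < 5 \<Longrightarrow> L!i < L!j" using srt len
    using len by (intro sorted_wrt_nth_less[OF srt]) auto
  have mem: "\<And>i. i < 5 \<Longrightarrow> \<exists>t\<in>T. fst t = L!i" using setL len
  proof -
    fix i :: nat assume "i < 5"
    then have "L!i \<in> set L" using len by simp
    then show "\<exists>t\<in>T. fst t = L!i" using setL by force
  qed
  obtain t0 where t0: "t0 \<in> T" "fst t0 = L!0" using mem[of 0] by auto
  obtain t1 where t1: "t1 \<in> T" "fst t1 = L!1" using mem[of 1] by auto
  obtain t2 where t2: "t2 \<in> T" "fst t2 = L!2" using mem[of 2] by auto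
  obtain t3 where t3: "t3 \<in> T" "fst t3 = L!3" using mem[of 3] by auto
  obtain t4 where t4: "t4 \<in> T" "fst t4 = L!4" using mem[of 4] by auto
  note t = t0(1) t1(1) t2(1) t3(1) t4(1)
  have x: "fst t0 < fst t1" "fst t1 < fst t2" "fst t2 < fst t3" "fst t3 < fst t4"
    using lt[of 0 1] lt[of 1 2] lt[of 2 3] lt[of 3 4] t0(2) t1(2) t2(2) t3(2) t4(2) by simp_all
  have sd: "\<And>u v. u \<in> T \<Longrightarrow> v \<in> T \<Longrightarrow> fst u < fst v \<Longrightarrow> snd u \<noteq> snd v"
    using assms(2) gop_snd by (metis less_irrefl)
  have x2: "fst t0 < fst t2" "fst t0 < fst t3" "fst t0 < fst t4" "fst t1 < fst t3" "fst t1 < fst t4"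
    "fst t2 < fst t4" using x by linarith+
  have "distinct [snd t0, snd t1, snd t2, snd t3, snd t4]"
    using x x2 t sd[of t0 t1] sd[of t0 t2] sd[of t0 t3] sd[of t0 t4] sd[of t1 t2] sd[of t1 t3] sd[of t1 t4]
       sd[of t2 t3] sd[of t2 t4] sd[of t3 t4] by auto
  from es5_core[OF this] x x2 t show ?thesis
    apply -
    apply (elim disjE)
    apply (erule trip; assumption)+
    done
qed


definition stp :: "point set \<Rightarrow> point \<Rightarrow> point \<Rightarrow> bool" where
  "stp P p r \<longleftrightarrow> (\<exists>q\<in>P. fst p < fst q \<and> fst q < fst r \<and> mono3 (snd p) (snd q) (snd r))"

lemma gop_subset: "general_orthogonal_position P \<Longrightarrow> T \<subseteq> P \<Longrightarrow> general_orthogonal_position T"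
  unfolding general_orthogonal_position_def by blast

lemma chain:
  assumes gop: "general_orthogonal_position P" and fin: "finite P"
  shows "S \<subseteq> P \<Longrightarrow> card S \<ge> 4*m+1 \<Longrightarrow>
     \<exists>c. (\<forall>i\<le>m. c i \<in> S) \<and> (\<forall>i<m. stp P (c i) (c (Suc i)))"
proof (induction m arbitrary: S)
  case 0
  then have "S \<noteq> {}" by auto
  then obtain s where "s \<in> S" by auto
  then show ?case by (rule_tac x="\<lambda>_. s" in exI) auto
next
  case (Suc m)
  define T where "T = {u\<in>S. \<not>(\<exists>w\<in>S. stp P u w)}"
  have finS: "finite S" using Suc.prems fin finite_subset by blast
  have TS: "T \<subseteq> S" by (auto simp: T_def)
  have cT: "card T \<le> 4"
  proof (rule ccontr)
    assume "\<not> card T \<le> 4"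
    then have "card T \<ge> 5" by simp
    moreover have "finite T" using TS finS finite_subset by blast
    moreover have "general_orthogonal_position T" using gop_subset[OF gop] TS Suc.prems by blast
    ultimately obtain p q r where pqr: "p \<in> T" "q \<in> T" "r \<in> T" "fst p < fst q" "fst q < fst r"
       "mono3 (snd p) (snd q) (snd r)" using es5 by blast
    have "stp P p r" unfolding stp_def using pqr TS Suc.prems(1) by blast
    then show False using pqr TS unfolding T_def by blast
  qed
  have "card (S - T) = card S - card T" using TS finS by (simp add: card_Diff_subset finite_subset)
  then have "card (S - T) \<ge> 4*m+1" using cT Suc.prems(2) by simp
  moreover have "S - T \<subseteq> P" using Suc.prems by blast
  ultimately obtain c where c: "\<forall>i\<le>m. c i \<in> S - T" "\<forall>i<m. stp P (c i) (c (Suc i))"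
    using Suc.IH by blast
  then have "c m \<in> S - T" by simp
  then obtain w where w: "w \<in> S" "stp P (c m) w" unfolding T_def by blast
  show ?case
  proof (rule exI[of _ "c(Suc m := w)"], intro conjI allI impI)
    fix i assume "i \<le> Suc m" then show "(c(Suc m := w)) i \<in> S"
      using c w by (cases "i = Suc m") auto
  next
    fix i assume "i < Suc m" then show "stp P ((c(Suc m := w)) i) ((c(Suc m := w)) (Suc i))"
      using c w by (cases "i = m") auto
  qed
qed


lemma drawing:
  assumes gop: "general_orthogonal_position P" and fin: "finite P" and n2: "n \<ge> 2"
    and cardP: "card P \<ge> 4*(n div 2)+1"
  shows "\<exists>pos hb. straight_through_drawing_path P n pos hb \<and> x_monotone_path n pos"
proof -
  define m where "m = n div 2"
  obtain c where c: "\<forall>i\<le>m. c i \<in> P" "\<forall>i<m. stp P (c i) (c (Suc i))"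
    using chain[OF gop fin, of P m] cardP m_def by blast
  define w where "w k = (SOME q. q\<in>P \<and> fst (c k) < fst q \<and> fst q < fst (c (Suc k)) \<and>
      mono3 (snd (c k)) (snd q) (snd (c (Suc k))))" for k
  have wP: "w k \<in> P \<and> fst (c k) < fst (w k) \<and> fst (w k) < fst (c (Suc k)) \<and>
      mono3 (snd (c k)) (snd (w k)) (snd (c (Suc k)))" if "k < m" for k
  proof -
    have "\<exists>q. q\<in>P \<and> fst (c k) < fst q \<and> fst q < fst (c (Suc k)) \<and>
      mono3 (snd (c k)) (snd q) (snd (c (Suc k)))" using c(2) that unfolding stp_def by blast
    then show ?thesis unfolding w_def by (rule someI_ex)
  qed
  define pos where "pos i = (if even i then c (i div 2) else w (i div 2))" for i
  define hb where "hb i = even i" for i :: nat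
  have posP: "pos i \<in> P" if "i < n" for i
  proof (cases "even i")
    case True
    then have "i div 2 \<le> m" using that m_def by simp
    then show ?thesis using c True by (simp add: pos_def)
  next
    case False
    then have "i div 2 < m" using that m_def by presburger
    then show ?thesis using wP False by (simp add: pos_def)
  qed
  have Xs: "fst (pos i) < fst (pos (Suc i))" if "Suc i < n" for i
  proof (cases "even i")
    case True
    then have "i div 2 < m" using that m_def by presburger
    then show ?thesis using wP True by (simp add: pos_def)
  next
    case False
    then have "i div 2 < m" using that m_def by presburger
    moreover have "Suc i div 2 = Suc (i div 2)" using False by presburger
    ultimately show ?thesis using wP False by (simp add: pos_def)
  qed
  have Xlt: "i < j \<Longrightarrow> j < n \<Longrightarrow> fst (pos i) < fst (pos j)" for i j
  proof (induction j)
    case 0 then show ?case by simp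
  next
    case (Suc j)
    show ?case
    proof (cases "i = j")
      case True then show ?thesis using Xs Suc.prems by simp
    next
      case False
      then have "fst (pos i) < fst (pos j)" using Suc by simp
      then show ?thesis using Xs[of j] Suc.prems by simp
    qed
  qed
  have btw: "mono3 (snd (pos i)) (snd (pos (Suc i))) (snd (pos (Suc (Suc i))))"
    if "even i" "Suc (Suc i) < n" for i
  proof -
    have "i div 2 < m" using that m_def by presburger
    moreover have "Suc i div 2 = i div 2" "Suc (Suc i) div 2 = Suc (i div 2)" using that by presburger+
    ultimately show ?thesis using wP that by (simp add: pos_def)
  qed
  have planar: "path_edge pos hb i \<inter> path_edge pos hb j \<subseteq> pos ` ({i, Suc i} \<inter> {j, Suc j})"
    if ij: "i < j" "Suc j < n" for i j
  proof
    fix z assume z: "z \<in> path_edge pos hb i \<inter> path_edge pos hb j"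
    have Ei: "fst (pos i) \<le> fst z \<and> fst z \<le> fst (pos (Suc i)) \<and>
        min (snd (pos i)) (snd (pos (Suc i))) \<le> snd z \<and> snd z \<le> max (snd (pos i)) (snd (pos (Suc i)))
     \<and> (if hb i then snd z = snd (pos i) \<or> fst z = fst (pos (Suc i))
         else fst z = fst (pos i) \<or> snd z = snd (pos (Suc i)))"
    proof -
      have "z \<in> L_edge (pos i) (pos (Suc i)) (hb i)" using z unfolding path_edge_def by blast
      moreover have "fst (pos i) \<le> fst (pos (Suc i))" using Xs[of i] ij by simp
      ultimately show ?thesis by (rule edge_mem)
    qed
    have Ej: "fst (pos j) \<le> fst z \<and> fst z \<le> fst (pos (Suc j)) \<and>
        min (snd (pos j)) (snd (pos (Suc j))) \<le> snd z \<and> snd z \<le> max (snd (pos j)) (snd (pos (Suc j)))"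
    proof -
      have "z \<in> L_edge (pos j) (pos (Suc j)) (hb j)" using z unfolding path_edge_def by blast
      moreover have "fst (pos j) \<le> fst (pos (Suc j))" using Xs[of j] ij by simp
      ultimately show ?thesis using edge_mem by blast
    qed
    show "z \<in> pos ` ({i, Suc i} \<inter> {j, Suc j})"
    proof (cases "j = Suc i")
      case False
      then have "Suc i < j" using ij by simp
      then have "fst (pos (Suc i)) < fst (pos j)" using Xlt ij by simp
      moreover have "fst z \<le> fst (pos (Suc i))" "fst (pos j) \<le> fst z" using Ei Ej by blast+
      ultimately show ?thesis by linarith
    next
      case True
      have "fst z \<le> fst (pos (Suc i))" "fst (pos j) \<le> fst z" using Ei Ej by blast+
      then have fz: "fst z = fst (pos (Suc i))" using True by simp
      have sz: "snd z = snd (pos (Suc i))"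
      proof (cases "even i")
        case True
        have "mono3 (snd (pos i)) (snd (pos (Suc i))) (snd (pos (Suc (Suc i))))"
          using btw True ij \<open>j = Suc i\<close> by simp
        moreover have "min (snd (pos i)) (snd (pos (Suc i))) \<le> snd z"
          "snd z \<le> max (snd (pos i)) (snd (pos (Suc i)))"
          "min (snd (pos (Suc i))) (snd (pos (Suc (Suc i)))) \<le> snd z"
          "snd z \<le> max (snd (pos (Suc i))) (snd (pos (Suc (Suc i))))"
          using Ei Ej \<open>j = Suc i\<close> by blast+
        ultimately show ?thesis unfolding mono3_def min_def max_def by (smt (verit))
      next
        case False
        then show ?thesis using Ei fz Xs[of i] ij \<open>j = Suc i\<close> by (simp add: hb_def)
      qed
      have "z = pos (Suc i)" using fz sz by (simp add: prod_eq_iff)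
      then show ?thesis using True by simp
    qed
  qed
  have "straight_through_drawing_path P n pos hb"
    unfolding straight_through_drawing_path_def planar_L_drawing_path_def
      leaves_end_horizontally_def leaves_start_horizontally_def
  proof (intro conjI allI impI)
    show "inj_on pos {..<n}"
    proof (rule inj_onI)
      fix a b assume "a \<in> {..<n}" "b \<in> {..<n}" "pos a = pos b"
      then show "a = b" using Xlt[of a b] Xlt[of b a] by (cases a b rule: linorder_cases) auto
    qed
    show "pos ` {..<n} \<subseteq> P" using posP by auto
  next
    fix i j :: nat assume "i < j \<and> Suc j < n"
    then show "path_edge pos hb i \<inter> path_edge pos hb j \<subseteq> pos ` ({i, Suc i} \<inter> {j, Suc j})"
      using planar by blast
  next
    fix i :: nat assume "0 < i \<and> Suc i < n"
    then show "(\<not> hb (i - 1)) = hb i" unfolding hb_def by (cases i) auto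
  qed
  moreover have "x_monotone_path n pos" unfolding x_monotone_path_def using Xs by (simp add: less_imp_le)
  ultimately show ?thesis by blast
qed

theorem theorem1:
  shows "\<exists>c::real. c > 0 \<and>
    (\<forall>n::nat. n \<ge> 2 \<longrightarrow>
      (\<forall>P :: point set. finite P \<and> general_orthogonal_position P \<and>
          real (card P) \<ge> c * real n * ln (real n) \<longrightarrow>
        (\<exists>pos hb. straight_through_drawing_path P n pos hb \<and> x_monotone_path n pos)))"
proof (rule exI[of _ 5], intro conjI allI impI)
  fix n :: nat and P :: "point set"
  assume n2: "n \<ge> 2" and H: "finite P \<and> general_orthogonal_position P \<and> real (card P) \<ge> 5 * real n * ln (real n)"
  have "(2::real) \<le> real n" using n2 by simp
  then have "ln (2::real) \<le> ln (real n)" by (rule ln_mono) simp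
  then have l: "2/3 \<le> ln (real n)" using ln2_ge_two_thirds by linarith
  have "5 * real n * (2/3) \<le> 5 * real n * ln (real n)"
    using mult_left_mono[OF l, of "5 * real n"] by simp
  moreover have "real (4*(n div 2)+1) \<le> 5 * real n * (2/3)"
  proof -
    have "4*(n div 2) \<le> 2*n" by simp
    then have "real (4*(n div 2)) \<le> real (2 * n)" by (rule of_nat_mono)
    then have "real (4*(n div 2)) \<le> 2 * real n" by simp
    moreover have "(2::real) \<le> real n" using n2 by simp
    ultimately show ?thesis by simp
  qed
  ultimately have "real (4*(n div 2)+1) \<le> real (card P)" using H by linarith
  then have "4*(n div 2)+1 \<le> card P" by (simp only: of_nat_le_iff)
  then show "\<exists>pos hb. straight_through_drawing_path P n pos hb \<and> x_monotone_path n pos"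
    using drawing[of P n] H n2 by blast
qed simp

end
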